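(* In the While-language extended with non-deterministic input, for every command $c$ and store $\sigma$: $(c,\sigma)\to^\infty$ if and only if for every store $\sigma'$, $(c,\sigma,\Downarrow)\Rightarrow^{co}_G\sigma',\Uparrow$.
   Context: Extended While-language syntax: variables $x$ range over a countably infinite set $\mathit{Var}$; $n$ ranges over natural numbers; values are $v ::= \mathsf{null}\mid n$ ($\mathsf{null}$ distinct from every natural number); expressions are $e ::= v\mid x\mid e_1\oplus e_2\mid\mathsf{input}$ with $\oplus\in\{+,-,*\}$, where $\oplus(n_1,n_2)$ is the result of the operation on naturals; commands are $c ::= \mathsf{skip}\mid\mathsf{alloc}\ x\mid x:=e\mid c_1;c_2\mid \mathsf{if}\ e\ c_1\ c_2\mid\mathsf{while}\ e\ c$. A store $\sigma$ is a finite partial map from $\mathit{Var}$ to values, with domain $\mathrm{dom}(\sigma)$, lookup $\sigma(x)$, update $\sigma[x\mapsto v]$. Expression evaluation $(e,\sigma)\Rightarrow_E v$ is the least relation with: $(v,\sigma)\Rightarrow_E v$; $(x,\sigma)\Rightarrow_E\sigma(x)$ if $x\in\mathrm{dom}(\sigma)$; if $(e_1,\sigma)\Rightarrow_E n_1$ and $(e_2,\sigma)\Rightarrow_E n_2$ with $n_1,n_2$ naturals then $(e_1\oplus e_2,\sigma)\Rightarrow_E\oplus(n_1,n_2)$; and $(\mathsf{input},\sigma)\Rightarrow_E v$ for every value $v$. Small-step relation $(c,\sigma)\to(c',\sigma')$ is the least relation with: $(\mathsf{alloc}\ x,\sigma)\to(\mathsf{skip},\sigma[x\mapsto\mathsf{null}])$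 if $x\notin\mathrm{dom}(\sigma)$; $(x:=e,\sigma)\to(\mathsf{skip},\sigma[x\mapsto v])$ if $x\in\mathrm{dom}(\sigma)$ and $(e,\sigma)\Rightarrow_E v$; $(c_1;c_2,\sigma)\to(c_1';c_2,\sigma')$ if $(c_1,\sigma)\to(c_1',\sigma')$; $(\mathsf{skip};c_2,\sigma)\to(c_2,\sigma)$; $(\mathsf{if}\ e\ c_1\ c_2,\sigma)\to(c_1,\sigma)$ if $(e,\sigma)\Rightarrow_E v$, $v\neq 0$; $(\mathsf{if}\ e\ c_1\ c_2,\sigma)\to(c_2,\sigma)$ if $(e,\sigma)\Rightarrow_E 0$; $(\mathsf{while}\ e\ c,\sigma)\to(c;\mathsf{while}\ e\ c,\sigma)$ if $(e,\sigma)\Rightarrow_E v$, $v\neq0$; $(\mathsf{while}\ e\ c,\sigma)\to(\mathsf{skip},\sigma)$ if $(e,\sigma)\Rightarrow_E 0$. The predicate $(c,\sigma)\to^\infty$ is coinductively defined (greatest predicate) by: if $(c,\sigma)\to(c',\sigma')$ and $(c',\sigma')\to^\infty$ then $(c,\sigma)\to^\infty$. Flag-based big-step semantics: status flags $\delta ::= \Downarrow\mid\Uparrow$. Expression evaluation $(e,\sigma,\delta)\Rightarrow_{GE}v,\delta'$ is the least relation with: $(v,\sigma,\Downarrow)\Rightarrow_{GE}v,\Downarrow$; $(x,\sigma,\Downarrow)\Rightarrow_{GE}\sigma(x),\Downarrow$ if $x\in\mathrm{dom}(\sigma)$; if $(e_1,\sigma,\Downarrow)\Rightarrow_{GE}n_1,\delta$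 and $(e_2,\sigma,\delta)\Rightarrow_{GE}n_2,\delta'$ ($n_1,n_2$ naturals) then $(e_1\oplus e_2,\sigma,\Downarrow)\Rightarrow_{GE}\oplus(n_1,n_2),\delta'$; $(\mathsf{input},\sigma,\Downarrow)\Rightarrow_{GE}v,\Downarrow$ for every value $v$; and $(e,\sigma,\Uparrow)\Rightarrow_{GE}v,\Uparrow$ for every value $v$. The command rules for judgments $(c,\sigma,\delta)\Rightarrow_G\sigma',\delta'$ are: $(\mathsf{skip},\sigma,\Downarrow)\Rightarrow_G\sigma,\Downarrow$; $(\mathsf{alloc}\ x,\sigma,\Downarrow)\Rightarrow_G\sigma[x\mapsto\mathsf{null}],\Downarrow$ if $x\notin\mathrm{dom}(\sigma)$; $(x:=e,\sigma,\Downarrow)\Rightarrow_G\sigma[x\mapsto v],\delta$ if $x\in\mathrm{dom}(\sigma)$ and $(e,\sigma,\Downarrow)\Rightarrow_{GE}v,\delta$; $(c_1;c_2,\sigma,\Downarrow)\Rightarrow_G\sigma'',\delta'$ if $(c_1,\sigma,\Downarrow)\Rightarrow_G\sigma',\delta$ and $(c_2,\sigma',\delta)\Rightarrow_G\sigma'',\delta'$; $(\mathsf{if}\ e\ c_1\ c_2,\sigma,\Downarrow)\Rightarrow_G\sigma',\delta'$ if $v\ne0$, $(e,\sigma,\Downarrow)\Rightarrow_{GE}v,\delta$ and $(c_1,\sigma,\delta)\Rightarrow_G\sigma',\delta'$; $(\mathsf{if}\ e\ c_1\ c_2,\sigma,\Downarrow)\Rightarrow_G\sigma',\delta'$ if $(e,\sigma,\Downarrow)\Rightarrow_{GE}0,\delta$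 and $(c_2,\sigma,\delta)\Rightarrow_G\sigma',\delta'$; $(\mathsf{while}\ e\ c,\sigma,\Downarrow)\Rightarrow_G\sigma'',\delta''$ if $(e,\sigma,\Downarrow)\Rightarrow_{GE}v,\delta$, $v\ne0$, $(c,\sigma,\delta)\Rightarrow_G\sigma',\delta'$ and $(\mathsf{while}\ e\ c,\sigma',\delta')\Rightarrow_G\sigma'',\delta''$; $(\mathsf{while}\ e\ c,\sigma,\Downarrow)\Rightarrow_G\sigma,\delta$ if $(e,\sigma,\Downarrow)\Rightarrow_{GE}0,\delta$; $(c,\sigma,\Uparrow)\Rightarrow_G\sigma',\Uparrow$ for every store $\sigma'$. $\Rightarrow^{co}_G$ is the coinductive interpretation of these command rules (greatest relation such that every element is the conclusion of a rule instance whose command premises lie in it). *)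

theory Defs
  imports Main "HOL-Library.Finite_Map"
begin

type_synonym vname = string

datatype val = Null | Num nat

datatype binop = Plus | Minus | Times

fun apply_op :: "binop \<Rightarrow> nat \<Rightarrow> nat \<Rightarrow> nat" where
  "apply_op Plus a b = a + b"
| "apply_op Minus a b = a - b"
| "apply_op Times a b = a * b"

datatype exp = V val | Var vname | Bin binop exp exp | Input

datatype com = Skip | Alloc vname | Assign vname exp | Seq com com
  | If exp com com | While exp com

type_synonym store = "(vname, val) fmap"

inductive eval :: "exp \<Rightarrow> store \<Rightarrow> val \<Rightarrow> bool" where
  eval_val: "eval (V v) \<sigma> v"
| eval_var: "fmlookup \<sigma> x = Some v \<Longrightarrow> eval (Var x) \<sigma> v"
| eval_bin: "eval e1 \<sigma> (Num n1) \<Longrightarrow> eval e2 \<sigma> (Num n2) \<Longrightarrow>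
             eval (Bin op e1 e2) \<sigma> (Num (apply_op op n1 n2))"
| eval_input: "eval Input \<sigma> v"

inductive step :: "com \<Rightarrow> store \<Rightarrow> com \<Rightarrow> store \<Rightarrow> bool" where
  step_alloc: "x |\<notin>| fmdom \<sigma> \<Longrightarrow> step (Alloc x) \<sigma> Skip (fmupd x Null \<sigma>)"
| step_assign: "x |\<in>| fmdom \<sigma> \<Longrightarrow> eval e \<sigma> v \<Longrightarrow> step (Assign x e) \<sigma> Skip (fmupd x v \<sigma>)"
| step_seq: "step c1 \<sigma> c1' \<sigma>' \<Longrightarrow> step (Seq c1 c2) \<sigma> (Seq c1' c2) \<sigma>'"
| step_seq_skip: "step (Seq Skip c2) \<sigma> c2 \<sigma>"
| step_if_true: "eval e \<sigma> v \<Longrightarrow> v \<noteq> Num 0 \<Longrightarrow> step (If e c1 c2) \<sigma> c1 \<sigma>"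
| step_if_false: "eval e \<sigma> (Num 0) \<Longrightarrow> step (If e c1 c2) \<sigma> c2 \<sigma>"
| step_while_true: "eval e \<sigma> v \<Longrightarrow> v \<noteq> Num 0 \<Longrightarrow> step (While e c) \<sigma> (Seq c (While e c)) \<sigma>"
| step_while_false: "eval e \<sigma> (Num 0) \<Longrightarrow> step (While e c) \<sigma> Skip \<sigma>"

coinductive diverges :: "com \<Rightarrow> store \<Rightarrow> bool" where
  "step c \<sigma> c' \<sigma>' \<Longrightarrow> diverges c' \<sigma>' \<Longrightarrow> diverges c \<sigma>"

text \<open>Status flags: Conv = \<open>\<Down>\<close>, Div = \<open>\<Up>\<close>.\<close>
datatype flag = Conv | Div

inductive geval :: "exp \<Rightarrow> store \<Rightarrow> flag \<Rightarrow> val \<Rightarrow> flag \<Rightarrow> bool" where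
  geval_val: "geval (V v) \<sigma> Conv v Conv"
| geval_var: "fmlookup \<sigma> x = Some v \<Longrightarrow> geval (Var x) \<sigma> Conv v Conv"
| geval_bin: "geval e1 \<sigma> Conv (Num n1) \<delta> \<Longrightarrow> geval e2 \<sigma> \<delta> (Num n2) \<delta>' \<Longrightarrow>
             geval (Bin op e1 e2) \<sigma> Conv (Num (apply_op op n1 n2)) \<delta>'"
| geval_input: "geval Input \<sigma> Conv v Conv"
| geval_div: "geval e \<sigma> Div v Div"

coinductive gbig_co :: "com \<Rightarrow> store \<Rightarrow> flag \<Rightarrow> store \<Rightarrow> flag \<Rightarrow> bool" where
  g_skip: "gbig_co Skip \<sigma> Conv \<sigma> Conv"
| g_alloc: "x |\<notin>| fmdom \<sigma> \<Longrightarrow> gbig_co (Alloc x) \<sigma> Conv (fmupd x Null \<sigma>) Conv"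
| g_assign: "x |\<in>| fmdom \<sigma> \<Longrightarrow> geval e \<sigma> Conv v \<delta> \<Longrightarrow>
             gbig_co (Assign x e) \<sigma> Conv (fmupd x v \<sigma>) \<delta>"
| g_seq: "gbig_co c1 \<sigma> Conv \<sigma>' \<delta> \<Longrightarrow> gbig_co c2 \<sigma>' \<delta> \<sigma>'' \<delta>' \<Longrightarrow>
          gbig_co (Seq c1 c2) \<sigma> Conv \<sigma>'' \<delta>'"
| g_if_true: "v \<noteq> Num 0 \<Longrightarrow> geval e \<sigma> Conv v \<delta> \<Longrightarrow> gbig_co c1 \<sigma> \<delta> \<sigma>' \<delta>' \<Longrightarrow>
              gbig_co (If e c1 c2) \<sigma> Conv \<sigma>' \<delta>'"
| g_if_false: "geval e \<sigma> Conv (Num 0) \<delta> \<Longrightarrow> gbig_co c2 \<sigma> \<delta> \<sigma>' \<delta>' \<Longrightarrow>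
              gbig_co (If e c1 c2) \<sigma> Conv \<sigma>' \<delta>'"
| g_while_true: "geval e \<sigma> Conv v \<delta> \<Longrightarrow> v \<noteq> Num 0 \<Longrightarrow> gbig_co c \<sigma> \<delta> \<sigma>' \<delta>' \<Longrightarrow>
                 gbig_co (While e c) \<sigma>' \<delta>' \<sigma>'' \<delta>'' \<Longrightarrow>
                 gbig_co (While e c) \<sigma> Conv \<sigma>'' \<delta>''"
| g_while_false: "geval e \<sigma> Conv (Num 0) \<delta> \<Longrightarrow> gbig_co (While e c) \<sigma> Conv \<sigma> \<delta>"
| g_div: "gbig_co c \<sigma> Div \<sigma>' Div"

end

theory Submission
  imports Defs
begin

lemma eval_geval: "eval e \<sigma> v \<Longrightarrow> geval e \<sigma> Conv v Conv"
  by (induction rule: eval.induct) (auto intro: geval.intros)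

lemma geval_Conv: "geval e \<sigma> d v \<delta> \<Longrightarrow> d = Conv \<Longrightarrow> \<delta> = Conv \<and> eval e \<sigma> v"
  by (induction rule: geval.induct) (auto intro: eval.intros)

inductive_cases gSkipE: "gbig_co Skip \<sigma> Conv \<sigma>' \<delta>"
inductive_cases gAllocE: "gbig_co (Alloc x) \<sigma> Conv \<sigma>' \<delta>"
inductive_cases gAssignE: "gbig_co (Assign x e) \<sigma> Conv \<sigma>' \<delta>"
inductive_cases gSeqE: "gbig_co (Seq c1 c2) \<sigma> Conv \<sigma>' \<delta>"
inductive_cases gIfE: "gbig_co (If e c1 c2) \<sigma> Conv \<sigma>' \<delta>"
inductive_cases gWhileE: "gbig_co (While e c) \<sigma> Conv \<sigma>' \<delta>"

lemma progress:
  "gbig_co c \<sigma> Conv \<sigma>' \<delta> \<Longrightarrow> c \<noteq> Skip \<Longrightarrow>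
   \<exists>c' \<sigma>''. step c \<sigma> c' \<sigma>'' \<and> gbig_co c' \<sigma>'' Conv \<sigma>' \<delta>"
proof (induction c arbitrary: \<sigma> \<sigma>' \<delta>)
  case Skip then show ?case by simp
next
  case (Alloc x) then show ?case
    by (auto elim!: gAllocE intro: step.intros gbig_co.intros)
next
  case (Assign x e) then show ?case
    by (auto elim!: gAssignE dest!: geval_Conv intro: step.intros gbig_co.intros)
next
  case (Seq c1 c2)
  from Seq.prems(1) obtain \<sigma>m \<delta>m where 1: "gbig_co c1 \<sigma> Conv \<sigma>m \<delta>m"
    and 2: "gbig_co c2 \<sigma>m \<delta>m \<sigma>' \<delta>" by (auto elim: gSeqE)
  show ?case
  proof (cases "c1 = Skip")
    case True
    with 1 have "\<sigma>m = \<sigma>" "\<delta>m = Conv" by (auto elim: gSkipE)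
    with True 2 show ?thesis by (auto intro: step.intros)
  next
    case False
    from Seq.IH(1)[OF 1 False] obtain c1' \<sigma>1 where "step c1 \<sigma> c1' \<sigma>1"
      "gbig_co c1' \<sigma>1 Conv \<sigma>m \<delta>m" by blast
    with 2 show ?thesis by (auto intro: step.intros gbig_co.intros)
  qed
next
  case (If e c1 c2) then show ?case
    by (auto elim!: gIfE dest!: geval_Conv intro: step.intros gbig_co.intros)
next
  case (While e c) then show ?case
    by (auto elim!: gWhileE dest!: geval_Conv intro: step.intros gbig_co.intros)
qed

lemma step_back:
  "step c \<sigma> c' \<sigma>' \<Longrightarrow> gbig_co c' \<sigma>' Conv \<sigma>'' \<delta> \<Longrightarrow> gbig_co c \<sigma> Conv \<sigma>'' \<delta>"
proof (induction arbitrary: \<sigma>'' \<delta> rule: step.induct)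
  case (step_alloc x \<sigma>) then show ?case by (auto elim!: gSkipE intro: gbig_co.intros)
next
  case (step_assign x \<sigma> e v) then show ?case
    by (auto elim!: gSkipE intro: gbig_co.intros eval_geval)
next
  case (step_seq c1 \<sigma> c1' \<sigma>' c2) then show ?case
    by (auto elim!: gSeqE intro: gbig_co.intros)
next
  case (step_seq_skip c2 \<sigma>) then show ?case
    by (auto intro: gbig_co.intros)
next
  case (step_if_true e \<sigma> v c1 c2) then show ?case
    by (auto intro: gbig_co.intros eval_geval)
next
  case (step_if_false e \<sigma> c1 c2) then show ?case
    by (auto intro: gbig_co.intros eval_geval)
next
  case (step_while_true e \<sigma> v c) then show ?case
    by (auto elim!: gSeqE intro: gbig_co.intros eval_geval)
next
  case (step_while_false e \<sigma> c) then show ?case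
    by (auto elim!: gSkipE intro: gbig_co.intros eval_geval)
qed

inductive steps :: "com \<Rightarrow> store \<Rightarrow> com \<Rightarrow> store \<Rightarrow> bool" where
  refl: "steps c \<sigma> c \<sigma>"
| trans: "step c \<sigma> c' \<sigma>' \<Longrightarrow> steps c' \<sigma>' c'' \<sigma>'' \<Longrightarrow> steps c \<sigma> c'' \<sigma>''"

lemma steps_big: "steps c \<sigma> c' \<sigma>' \<Longrightarrow> c' = Skip \<Longrightarrow> gbig_co c \<sigma> Conv \<sigma>' Conv"
  by (induction rule: steps.induct) (auto intro: gbig_co.intros step_back)

lemma seq_div:
  assumes "diverges (Seq c1 c2) \<sigma>"
    and "\<not> (\<exists>\<sigma>1. steps c1 \<sigma> Skip \<sigma>1 \<and> diverges c2 \<sigma>1)"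
  shows "diverges c1 \<sigma>"
  using assms
proof (coinduction arbitrary: c1 \<sigma>)
  case (diverges c1 \<sigma>)
  from diverges(1) obtain c' \<sigma>' where s: "step (Seq c1 c2) \<sigma> c' \<sigma>'" and d: "diverges c' \<sigma>'"
    by (auto elim: Defs.diverges.cases)
  from s show ?case
  proof (cases rule: step.cases)
    case (step_seq c1')
    have "\<not> (\<exists>\<sigma>1. steps c1' \<sigma>' Skip \<sigma>1 \<and> diverges c2 \<sigma>1)"
      using diverges(2) step_seq by (auto intro: steps.trans)
    with step_seq d show ?thesis by blast
  next
    case step_seq_skip
    with diverges(2) d show ?thesis by (auto intro: steps.refl)
  qed
qed

lemma no_div_skip: "diverges Skip \<sigma> \<Longrightarrow> False"
  by (auto elim: diverges.cases step.cases)

lemma div_big: assumes "diverges c \<sigma>" shows "gbig_co c \<sigma> Conv \<sigma>' Div"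
  using assms
  proof (coinduction arbitrary: c \<sigma> \<sigma>' rule: gbig_co.coinduct)
    case (gbig_co c \<sigma> \<sigma>')
    then have d: "diverges c \<sigma>" by auto
    from d obtain c1 \<sigma>1 where s: "step c \<sigma> c1 \<sigma>1" and d1: "diverges c1 \<sigma>1"
      by (auto elim: diverges.cases)
    from s show ?case
    proof (cases rule: step.cases)
      case (step_alloc x) with d1 have False using no_div_skip by simp then show ?thesis ..
    next
      case (step_assign x e v) with d1 have False using no_div_skip by simp then show ?thesis ..
    next
      case (step_seq c1a c1a' c2)
      show ?thesis
      proof (cases "\<exists>\<sigma>m. steps c1a \<sigma> Skip \<sigma>m \<and> diverges c2 \<sigma>m")
        case True
        then obtain \<sigma>m where "steps c1a \<sigma> Skip \<sigma>m" "diverges c2 \<sigma>m" by blast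
        then have "gbig_co c1a \<sigma> Conv \<sigma>m Conv" using steps_big by blast
        with \<open>diverges c2 \<sigma>m\<close> step_seq show ?thesis
          apply (rule_tac disjI2, rule_tac disjI2, rule_tac disjI2, rule_tac disjI1)
          by auto
      next
        case False
        have "diverges (Seq c1a c2) \<sigma>" using d step_seq by simp
        with False have "diverges c1a \<sigma>" using seq_div by blast
        moreover have "gbig_co c2 \<sigma> Div \<sigma>' Div" by (rule g_div)
        ultimately show ?thesis using step_seq
          apply (rule_tac disjI2, rule_tac disjI2, rule_tac disjI2, rule_tac disjI1)
          by auto
      qed
    next
      case step_seq_skip
      have "gbig_co Skip \<sigma> Conv \<sigma> Conv" by (rule g_skip)
      with d1 step_seq_skip show ?thesis
          apply (rule_tac disjI2, rule_tac disjI2, rule_tac disjI2, rule_tac disjI1)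
          by auto
    next
      case step_if_true with d1 show ?thesis
        using eval_geval
          apply (rule_tac disjI2, rule_tac disjI2, rule_tac disjI2, rule_tac disjI2, rule_tac disjI1)
          by (fastforce dest: eval_geval)
    next
      case step_if_false with d1 show ?thesis
        using eval_geval
          apply (rule_tac disjI2, rule_tac disjI2, rule_tac disjI2, rule_tac disjI2, rule_tac disjI2, rule_tac disjI1)
          by (fastforce dest: eval_geval)
    next
      case step_while_true
      then obtain e v cb where h: "c = While e cb" "c1 = Seq cb (While e cb)" "\<sigma>1 = \<sigma>" "eval e \<sigma> v" "v \<noteq> Num 0" by blast
      have ge: "geval e \<sigma> Conv v Conv" using h eval_geval by blast
      have ds: "diverges (Seq cb (While e cb)) \<sigma>" using d1 h by simp
      show ?thesis
      proof (cases "\<exists>\<sigma>m. steps cb \<sigma> Skip \<sigma>m \<and> diverges (While e cb) \<sigma>m")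
        case True
        then obtain \<sigma>m where "steps cb \<sigma> Skip \<sigma>m" "diverges (While e cb) \<sigma>m" by blast
        then have "gbig_co cb \<sigma> Conv \<sigma>m Conv" using steps_big by blast
        with \<open>diverges (While e cb) \<sigma>m\<close> ge h show ?thesis
          apply (rule_tac disjI2, rule_tac disjI2, rule_tac disjI2, rule_tac disjI2, rule_tac disjI2, rule_tac disjI2, rule_tac disjI1)
          by auto
      next
        case False
        with ds have "diverges cb \<sigma>" using seq_div by blast
        moreover have "gbig_co (While e cb) \<sigma> Div \<sigma>' Div" by (rule g_div)
        ultimately show ?thesis using ge h
          apply (rule_tac disjI2, rule_tac disjI2, rule_tac disjI2, rule_tac disjI2, rule_tac disjI2, rule_tac disjI2, rule_tac disjI1)
          by auto
      qed
    next
      case step_while_false with d1 have False using no_div_skip by simp then show ?thesis ..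
    qed
  qed

lemma big_div: "gbig_co c \<sigma> Conv \<sigma>' Div \<Longrightarrow> diverges c \<sigma>"
proof (coinduction arbitrary: c \<sigma>)
  case (diverges c \<sigma>)
  have "c \<noteq> Skip" using diverges by (auto elim: gSkipE)
  from progress[OF diverges this] show ?case by blast
qed

theorem theorem27:
  fixes c :: com and \<sigma> :: store
  shows "diverges c \<sigma> \<longleftrightarrow> (\<forall>\<sigma>' :: store. gbig_co c \<sigma> Conv \<sigma>' Div)"
  using div_big big_div by blast

end
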